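(* Let $W$ be a nonempty closed subset of $\mathbb{R}$ and let $\alpha,\beta,z\in\mathrm{Aut}(W)$. Suppose $\mathrm{Fix}_W(z)=\emptyset$ and $z$ commutes with both $\alpha$ and $\beta$. If $\mathrm{Fix}_W(\alpha)\ne\emptyset\ne\mathrm{Fix}_W(\beta)$ and $\mathrm{Fix}_W(\alpha)\cap\mathrm{Fix}_W(\beta)=\emptyset$, then $\langle\alpha,\beta\rangle$ contains a nonabelian free subgroup.
   Context: For a totally ordered set $X$ (here $W\subseteq\mathbb{R}$ with the induced order), $\mathrm{Aut}(X)$ is the group of order preserving bijections $X\to X$. For a group $G$ acting on $Y$ and $H\subseteq G$, $\mathrm{Fix}_Y(H)=\{y\in Y: hy=y\ \forall h\in H\}$, and $\mathrm{Fix}_Y(g)=\mathrm{Fix}_Y(\{g\})$. *)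

theory Defs
  imports "HOL-Analysis.Analysis" "HOL-Algebra.Bij" "HOL-Algebra.Generated_Groups"
begin

text \<open>Aut(W): order preserving bijections W \<rightarrow> W, as elements of the group
  BijGroup W (functions extensional on W, composition as product).\<close>
definition Aut_ord :: "real set \<Rightarrow> (real \<Rightarrow> real) set" where
  "Aut_ord W = {f \<in> Bij W. mono_on W f}"

definition Fix_on :: "'a set \<Rightarrow> ('a \<Rightarrow> 'a) \<Rightarrow> 'a set" where
  "Fix_on Y g = {y \<in> Y. g y = y}"

text \<open>Words over a set S of group elements: letters (s, True) = s, (s, False) = s inverse.\<close>
definition word_eval :: "('g, 'b) monoid_scheme \<Rightarrow> ('g \<times> bool) list \<Rightarrow> 'g" where
  "word_eval G w = foldr (\<lambda>(s, e) acc. (if e then s else inv\<^bsub>G\<^esub> s) \<otimes>\<^bsub>G\<^esub> acc) w \<one>\<^bsub>G\<^esub>"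

definition reduced_word :: "('g \<times> bool) list \<Rightarrow> bool" where
  "reduced_word w \<longleftrightarrow> (\<forall>i. Suc i < length w \<longrightarrow>
      \<not> (fst (w ! i) = fst (w ! Suc i) \<and> snd (w ! i) \<noteq> snd (w ! Suc i)))"

definition free_basis :: "('g, 'b) monoid_scheme \<Rightarrow> 'g set \<Rightarrow> bool" where
  "free_basis G S \<longleftrightarrow> S \<subseteq> carrier G \<and>
     (\<forall>w. set (map fst w) \<subseteq> S \<longrightarrow> reduced_word w \<longrightarrow> w \<noteq> [] \<longrightarrow> word_eval G w \<noteq> \<one>\<^bsub>G\<^esub>)"

definition contains_nonabelian_free :: "('g, 'b) monoid_scheme \<Rightarrow> 'g set \<Rightarrow> bool" where
  "contains_nonabelian_free G H \<longleftrightarrow>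
     (\<exists>S. S \<subseteq> H \<and> free_basis G S \<and> (\<exists>a b. a \<in> S \<and> b \<in> S \<and> a \<noteq> b))"

end

theory Submission
  imports Defs
begin

definition ginv :: "real set \<Rightarrow> (real \<Rightarrow> real) \<Rightarrow> real \<Rightarrow> real" where
  "ginv W f = restrict (inv_into W f) W"

lemma aut_bij: "f \<in> Aut_ord W \<Longrightarrow> bij_betw f W W"
  by (simp add: Aut_ord_def Bij_def)

lemma aut_Bij: "f \<in> Aut_ord W \<Longrightarrow> f \<in> Bij W"
  by (simp add: Aut_ord_def)

lemma aut_in: "f \<in> Aut_ord W \<Longrightarrow> x \<in> W \<Longrightarrow> f x \<in> W"
  by (meson aut_bij bij_betwE)

lemma aut_mono: "f \<in> Aut_ord W \<Longrightarrow> x \<in> W \<Longrightarrow> y \<in> W \<Longrightarrow> x \<le> y \<Longrightarrow> f x \<le> f y"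
  by (auto simp: Aut_ord_def mono_on_def)

lemma aut_inj: "f \<in> Aut_ord W \<Longrightarrow> x \<in> W \<Longrightarrow> y \<in> W \<Longrightarrow> f x = f y \<longleftrightarrow> x = y"
  by (meson aut_bij bij_betw_def inj_onD)

lemma aut_less: assumes "f \<in> Aut_ord W" "x \<in> W" "y \<in> W" shows "f x < f y \<longleftrightarrow> x < y"
proof
  assume "f x < f y"
  then show "x < y" using aut_mono[OF assms(1) assms(3) assms(2)] by (meson linorder_not_le)
next
  assume "x < y"
  then have "f x \<le> f y" "f x \<noteq> f y" using aut_mono[OF assms] aut_inj[OF assms] by auto
  then show "f x < f y" by simp
qed

lemma aut_le: assumes "f \<in> Aut_ord W" "x \<in> W" "y \<in> W" shows "f x \<le> f y \<longleftrightarrow> x \<le> y"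
  using aut_less[OF assms(1) assms(3) assms(2)] by (simp add: not_less[symmetric])

lemma ginv_f: "f \<in> Aut_ord W \<Longrightarrow> x \<in> W \<Longrightarrow> ginv W f (f x) = x"
  unfolding ginv_def using aut_in[of f W x] aut_bij[of f W]
  by (simp add: bij_betw_inv_into_left)

lemma f_ginv: "f \<in> Aut_ord W \<Longrightarrow> x \<in> W \<Longrightarrow> f (ginv W f x) = x"
  unfolding ginv_def using aut_bij[of f W]
  by (simp add: bij_betw_inv_into_right)

lemma ginv_in: "f \<in> Aut_ord W \<Longrightarrow> x \<in> W \<Longrightarrow> ginv W f x \<in> W"
  unfolding ginv_def using aut_bij
  by (simp add: bij_betw_def inv_into_into)

lemma ginv_aut: assumes "f \<in> Aut_ord W" shows "ginv W f \<in> Aut_ord W"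
proof -
  have "ginv W f \<in> Bij W" unfolding ginv_def using restrict_inv_into_Bij aut_Bij[OF assms] by blast
  moreover have "mono_on W (ginv W f)"
  proof (rule mono_onI)
    fix r s assume "r \<in> W" "s \<in> W" "r \<le> s"
    then show "ginv W f r \<le> ginv W f s"
      using aut_le[OF assms, of "ginv W f r" "ginv W f s"] f_ginv[OF assms] ginv_in[OF assms] by auto
  qed
  ultimately show ?thesis by (simp add: Aut_ord_def)
qed

lemma ginv_BijGroup: "f \<in> Aut_ord W \<Longrightarrow> inv\<^bsub>BijGroup W\<^esub> f = ginv W f"
  by (simp add: inv_BijGroup aut_Bij ginv_def)

lemma carrier_BijGroup: "carrier (BijGroup W) = Bij W"
  unfolding BijGroup_def by simp

lemma one_BijGroup: "\<one>\<^bsub>BijGroup W\<^esub> = (\<lambda>x\<in>W. x)"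
  unfolding BijGroup_def by simp

lemma mult_BijGroup: "f \<in> Bij W \<Longrightarrow> g \<in> Bij W \<Longrightarrow> x \<in> W \<Longrightarrow> (f \<otimes>\<^bsub>BijGroup W\<^esub> g) x = f (g x)"
  unfolding BijGroup_def by (simp add: compose_def)

lemma pow_BijGroup: assumes "f \<in> Bij W" "x \<in> W"
  shows "(f [^]\<^bsub>BijGroup W\<^esub> (n::nat)) x = (f ^^ n) x"
  using assms(2)
proof (induction n arbitrary: x)
  case 0 then show ?case by (simp add: one_BijGroup)
next
  case (Suc n)
  have "f [^]\<^bsub>BijGroup W\<^esub> n \<in> Bij W"
    using monoid.nat_pow_closed[OF group.is_monoid[OF group_BijGroup], of f W n] assms(1)
    unfolding carrier_BijGroup by blast
  moreover have "f x \<in> W" using assms(1) Suc.prems Bij_imp_funcset by blast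
  ultimately have "(f [^]\<^bsub>BijGroup W\<^esub> Suc n) x = (f ^^ n) (f x)"
    using Suc assms(1) by (simp add: mult_BijGroup)
  then show ?case by (simp only: funpow_Suc_right comp_apply)
qed

lemma funpow_Suc': "(f ^^ Suc n) x = (f ^^ n) (f x)"
  by (simp only: funpow_Suc_right comp_apply)

lemma funpow_in: "f \<in> Aut_ord W \<Longrightarrow> x \<in> W \<Longrightarrow> (f ^^ n) x \<in> W"
  by (induction n) (simp_all add: aut_in)

lemma funpow_less:
  assumes f: "f \<in> Aut_ord W" and x: "x \<in> W" and y: "y \<in> W"
  shows "(f ^^ n) x < (f ^^ n) y \<longleftrightarrow> x < y"
proof (induction n)
  case (Suc n) then show ?case using aut_less[OF f funpow_in[OF f x, of n] funpow_in[OF f y, of n]] by simp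
qed simp

lemma funpow_le:
  assumes f: "f \<in> Aut_ord W" and x: "x \<in> W" and y: "y \<in> W"
  shows "(f ^^ n) x \<le> (f ^^ n) y \<longleftrightarrow> x \<le> y"
proof (induction n)
  case (Suc n) then show ?case using aut_le[OF f funpow_in[OF f x, of n] funpow_in[OF f y, of n]] by simp
qed simp

lemma funpow_inj:
  assumes f: "f \<in> Aut_ord W" and x: "x \<in> W" and y: "y \<in> W"
  shows "(f ^^ n) x = (f ^^ n) y \<longleftrightarrow> x = y"
proof (induction n)
  case (Suc n) then show ?case using aut_inj[OF f funpow_in[OF f x, of n] funpow_in[OF f y, of n]] by simp
qed simp

lemma funpow_ginv:
  assumes f: "f \<in> Aut_ord W" and x: "x \<in> W"
  shows "(f ^^ n) ((ginv W f ^^ n) x) = x"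
proof (induction n)
  case (Suc n)
  have "(f ^^ Suc n) ((ginv W f ^^ Suc n) x) = (f ^^ n) (f (ginv W f ((ginv W f ^^ n) x)))"
    using funpow_Suc_right[of n f] by simp
  also have "\<dots> = (f ^^ n) ((ginv W f ^^ n) x)"
    using f_ginv[OF f funpow_in[OF ginv_aut[OF f] x]] by simp
  also have "\<dots> = x" using Suc.IH .
  finally show ?case .
qed simp

lemma funpow_commute:
  assumes c: "\<And>x. x \<in> W \<Longrightarrow> g (f x) = f (g x)" and f: "f \<in> Aut_ord W" and g: "g \<in> Aut_ord W" and x: "x \<in> W"
  shows "(g ^^ n) ((f ^^ m) x) = (f ^^ m) ((g ^^ n) x)"
proof -
  have 1: "g ((f ^^ m) y) = (f ^^ m) (g y)" if y: "y \<in> W" for y m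
  proof (induction m)
    case (Suc m)
    have "g ((f ^^ Suc m) y) = f (g ((f ^^ m) y))" using c[OF funpow_in[OF f y, of m]] by simp
    then show ?case using Suc.IH by simp
  qed simp
  show ?thesis
  proof (induction n)
    case (Suc n)
    have "(g ^^ Suc n) ((f ^^ m) x) = g ((f ^^ m) ((g ^^ n) x))" using Suc.IH by simp
    also have "\<dots> = (f ^^ m) (g ((g ^^ n) x))" using 1[OF funpow_in[OF g x, of n]] .
    finally show ?case by simp
  qed simp
qed

lemma funpow_incr:
  assumes f: "f \<in> Aut_ord W" and x: "x \<in> W" "f x > x"
  shows "n \<le> m \<Longrightarrow> (f ^^ n) x \<le> (f ^^ m) x"
proof (induction m)
  case (Suc m)
  have step: "(f ^^ m) x \<le> (f ^^ Suc m) x"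
    using funpow_le[OF f x(1) aut_in[OF f x(1)], of m] x(2) by (simp only: funpow_Suc_right comp_def)
  show ?case
  proof (cases "n = Suc m")
    case False
    then have "n \<le> m" using Suc.prems by simp
    then show ?thesis using Suc.IH step by linarith
  qed simp
qed simp

lemma limit_up:
  assumes f: "f \<in> Aut_ord W" and W: "closed W" and x: "x \<in> W" "f x > x"
    and nofix: "\<And>y. y \<in> W \<Longrightarrow> x \<le> y \<Longrightarrow> y \<le> c \<Longrightarrow> f y \<noteq> y"
  shows "\<exists>n. (f ^^ n) x > c"
proof (rule ccontr)
  assume "\<not> ?thesis"
  then have bd: "\<And>n. (f ^^ n) x \<le> c" by (simp add: not_less)
  define S where "S = range (\<lambda>n. (f ^^ n) x)"
  have SW: "S \<subseteq> W" using funpow_in[OF f x(1)] by (auto simp: S_def)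
  have bdd: "bdd_above S" using bd by (auto simp: S_def bdd_above_def)
  have ne: "S \<noteq> {}" by (simp add: S_def)
  define L where "L = Sup S"
  have LW: "L \<in> W" unfolding L_def using closed_subset_contains_Sup[OF W SW ne bdd] .
  have le: "(f ^^ n) x \<le> L" for n unfolding L_def using bdd by (auto intro: cSup_upper simp: S_def)
  have Lc: "L \<le> c" unfolding L_def using bd ne by (auto intro!: cSup_least simp: S_def)
  have xL: "x \<le> L" using le[of 0] by simp
  have "f L \<ge> L"
    unfolding L_def[symmetric]
  proof -
    have "(f ^^ n) x \<le> f L" for n
    proof (cases n)
      case 0 then show ?thesis using le[of 1] x aut_le[OF f x(1) LW] by simp
    next
      case (Suc k)
      then show ?thesis using le[of k] aut_le[OF f funpow_in[OF f x(1)] LW] by auto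
    qed
    then show "L \<le> f L" unfolding L_def using ne by (auto intro!: cSup_least simp: S_def)
  qed
  moreover have "f L \<noteq> L" using nofix[OF LW xL Lc] .
  ultimately have gt: "f L > L" by simp
  obtain y where y: "y \<in> W" "f y = L" using f_ginv[OF f LW] ginv_in[OF f LW] by blast
  have yL: "y < L" using aut_less[OF f y(1) LW] gt y by simp
  obtain n where "y < (f ^^ n) x"
    using less_cSupD[OF ne, of y] yL unfolding L_def S_def by auto
  then have "f y < f ((f ^^ n) x)" using aut_less[OF f y(1) funpow_in[OF f x(1)]] by simp
  then have "L < (f ^^ Suc n) x" using y by simp
  then show False using le[of "Suc n"] by simp
qed

lemma FixSup:
  assumes f: "f \<in> Aut_ord W" and LW: "L \<in> W" and S: "\<And>s. s \<in> S \<Longrightarrow> s \<in> W \<and> f s = s"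
    and approx: "\<And>y. y < L \<Longrightarrow> \<exists>s\<in>S. y < s \<and> s \<le> L"
  shows "f L = L"
proof (rule ccontr)
  assume ne: "f L \<noteq> L"
  show False
  proof (cases "f L > L")
    case True
    obtain y where y: "y \<in> W" "f y = L" using f_ginv[OF f LW] ginv_in[OF f LW] by blast
    have yL: "y < L" using aut_less[OF f y(1) LW] True y by simp
    obtain s where s: "s \<in> S" "y < s" "s \<le> L" using approx[OF yL] by blast
    have "f y < f s" using aut_less[OF f y(1), of s] S[OF s(1)] s(2) by blast
    then show False using S[OF s(1)] y s by linarith
  next
    case False
    then have "f L < L" using ne by simp
    then obtain s where s: "s \<in> S" "f L < s" "s \<le> L" using approx by blast
    have "f s \<le> f L" using aut_le[OF f _ LW] S[OF s(1)] s(3) by blast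
    then show False using S[OF s(1)] s by simp
  qed
qed

lemma FixInf:
  assumes f: "f \<in> Aut_ord W" and LW: "L \<in> W" and S: "\<And>s. s \<in> S \<Longrightarrow> s \<in> W \<and> f s = s"
    and approx: "\<And>y. y > L \<Longrightarrow> \<exists>s\<in>S. y > s \<and> s \<ge> L"
  shows "f L = L"
proof (rule ccontr)
  assume ne: "f L \<noteq> L"
  show False
  proof (cases "f L < L")
    case True
    obtain y where y: "y \<in> W" "f y = L" using f_ginv[OF f LW] ginv_in[OF f LW] by blast
    have yL: "y > L" using aut_less[OF f LW y(1)] True y by simp
    obtain s where s: "s \<in> S" "y > s" "s \<ge> L" using approx[OF yL] by blast
    have "f y > f s" using aut_less[OF f _ y(1), of s] S[OF s(1)] s(2) by blast
    then show False using S[OF s(1)] y s by linarith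
  next
    case False
    then have "f L > L" using ne by simp
    then obtain s where s: "s \<in> S" "f L > s" "s \<ge> L" using approx by blast
    have "f s \<ge> f L" using aut_le[OF f LW] S[OF s(1)] s(3) by blast
    then show False using S[OF s(1)] s by simp
  qed
qed

definition evl :: "real set \<Rightarrow> (real \<Rightarrow> real) \<times> bool \<Rightarrow> real \<Rightarrow> real" where
  "evl W l = (if snd l then fst l else inv\<^bsub>BijGroup W\<^esub> (fst l))"

lemma evl_Bij: "fst l \<in> Bij W \<Longrightarrow> evl W l \<in> Bij W"
  unfolding evl_def using group.inv_closed[OF group_BijGroup, of "fst l" W]
  by (auto simp: carrier_BijGroup)

lemma word_eval_Cons: "word_eval G (l # w) = evl' \<otimes>\<^bsub>G\<^esub> word_eval G w"
  if "evl' = (if snd l then fst l else inv\<^bsub>G\<^esub> (fst l))"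
  using that by (cases l) (simp add: word_eval_def)

lemma word_eval_Bij: "set (map fst w) \<subseteq> Bij (W::real set) \<Longrightarrow> word_eval (BijGroup W) w \<in> Bij W"
proof (induction w)
  case Nil
  have "word_eval (BijGroup W) [] = \<one>\<^bsub>BijGroup W\<^esub>" by (simp add: word_eval_def)
  then show ?case using id_Bij[of W] one_BijGroup[of W] by metis
next
  case (Cons l w)
  have "word_eval (BijGroup W) (l # w) = evl W l \<otimes>\<^bsub>BijGroup W\<^esub> word_eval (BijGroup W) w"
    by (rule word_eval_Cons) (simp add: evl_def)
  moreover have "evl W l \<in> Bij W" using Cons.prems evl_Bij[of l W] by simp
  moreover have "word_eval (BijGroup W) w \<in> Bij W" using Cons by simp
  ultimately show ?case using monoid.m_closed[OF group.is_monoid[OF group_BijGroup, of W]]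
    unfolding carrier_BijGroup by metis
qed

lemma reduced_Cons: assumes "reduced_word (l # w)" shows "reduced_word w"
  unfolding reduced_word_def
proof (intro allI impI)
  fix i assume "Suc i < length w"
  then have "Suc (Suc i) < length (l # w)" by simp
  with assms have "\<not> (fst ((l#w) ! Suc i) = fst ((l#w) ! Suc (Suc i)) \<and> snd ((l#w) ! Suc i) \<noteq> snd ((l#w) ! Suc (Suc i)))"
    unfolding reduced_word_def by blast
  then show "\<not> (fst (w ! i) = fst (w ! Suc i) \<and> snd (w ! i) \<noteq> snd (w ! Suc i))" by simp
qed

lemma reduced_Cons2: assumes "reduced_word (l # m # w)" shows "m \<noteq> (fst l, \<not> snd l)"
proof -
  have "\<not> (fst ((l#m#w) ! 0) = fst ((l#m#w) ! Suc 0) \<and> snd ((l#m#w) ! 0) \<noteq> snd ((l#m#w) ! Suc 0))"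
    using assms unfolding reduced_word_def by (metis length_Cons zero_less_Suc Suc_less_eq)
  then have "\<not> (fst l = fst m \<and> snd l \<noteq> snd m)" by simp
  then show ?thesis by (cases m) auto
qed

lemma pingpong:
  assumes SB: "S \<subseteq> Bij W"
    and mp: "\<And>l m y. fst l \<in> S \<Longrightarrow> fst m \<in> S \<Longrightarrow> m \<noteq> (fst l, \<not> snd l) \<Longrightarrow> y \<in> X m \<Longrightarrow> evl W l y \<in> X l"
    and x0: "x0 \<in> W" "\<And>l. fst l \<in> S \<Longrightarrow> x0 \<notin> X l" "\<And>l. fst l \<in> S \<Longrightarrow> evl W l x0 \<in> X l"
  shows "free_basis (BijGroup W) S"
proof -
  have claim: "word_eval (BijGroup W) w x0 \<in> X (hd w)"
    if "w \<noteq> []" "set (map fst w) \<subseteq> S" "reduced_word w" for w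
    using that
  proof (induction w)
    case Nil then show ?case by simp
  next
    case (Cons l w)
    have eq: "word_eval (BijGroup W) (l # w) = evl W l \<otimes>\<^bsub>BijGroup W\<^esub> word_eval (BijGroup W) w"
      by (rule word_eval_Cons) (simp add: evl_def)
    have lS: "fst l \<in> S" using Cons.prems by simp
    have wS: "set (map fst w) \<subseteq> S" using Cons.prems by simp
    have "evl W l \<in> Bij W" using lS SB evl_Bij[of l W] by blast
    moreover have wB: "word_eval (BijGroup W) w \<in> Bij W" using wS SB word_eval_Bij by blast
    ultimately have ev: "word_eval (BijGroup W) (l # w) x0 = evl W l (word_eval (BijGroup W) w x0)"
      using eq mult_BijGroup x0(1) by simp
    show ?case
    proof (cases w)
      case Nil
      then have "word_eval (BijGroup W) w x0 = x0" using x0(1) by (simp add: word_eval_def one_BijGroup)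
      then show ?thesis using ev x0(3)[OF lS] by simp
    next
      case (Cons m w')
      have red: "reduced_word w" using Cons.prems reduced_Cons by blast
      have IH: "word_eval (BijGroup W) w x0 \<in> X m" using Cons.IH[OF _ wS red] \<open>w = m # w'\<close> by simp
      have "m \<noteq> (fst l, \<not> snd l)" using Cons.prems(3) \<open>w = m # w'\<close> reduced_Cons2 by blast
      moreover have "fst m \<in> S" using wS \<open>w = m # w'\<close> by simp
      ultimately show ?thesis using mp[OF lS _ _ IH] ev by simp
    qed
  qed
  show ?thesis unfolding free_basis_def
  proof (intro conjI allI impI)
    show "S \<subseteq> carrier (BijGroup W)" using SB by (simp add: carrier_BijGroup)
    fix w assume w: "set (map fst w) \<subseteq> S" "reduced_word w" "w \<noteq> []"
    then have "word_eval (BijGroup W) w x0 \<in> X (hd w)" using claim by blast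
    moreover have "fst (hd w) \<in> S" using w by (cases w) auto
    ultimately have "word_eval (BijGroup W) w x0 \<noteq> x0" using x0(2) by metis
    then show "word_eval (BijGroup W) w \<noteq> \<one>\<^bsub>BijGroup W\<^esub>" using x0(1) unfolding one_BijGroup by force
  qed
qed

lemma unbounded_up:
  assumes f: "f \<in> Aut_ord W" and W: "closed W" and free: "\<And>x. x \<in> W \<Longrightarrow> f x \<noteq> x"
    and T: "T \<subseteq> W" "q \<in> T" "\<And>x. x \<in> T \<Longrightarrow> f x \<in> T" "\<And>x. x \<in> T \<Longrightarrow> ginv W f x \<in> T"
  shows "\<exists>t\<in>T. t > c"
proof -
  have qW: "q \<in> W" using T by blast
  have inT: "(g ^^ n) q \<in> T" if "\<And>x. x \<in> T \<Longrightarrow> g x \<in> T" for g n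
    by (induction n) (simp_all add: that T(2))
  show ?thesis
  proof (cases "f q > q")
    case True
    obtain n where "(f ^^ n) q > c" using limit_up[OF f W qW True, of c] free by blast
    then show ?thesis using inT[of f n] T(3) by blast
  next
    case False
    then have "f q < q" using free[OF qW] by simp
    then have gq: "ginv W f q > q"
      using aut_less[OF f qW ginv_in[OF f qW]] f_ginv[OF f qW] by simp
    have gfree: "ginv W f x \<noteq> x" if "x \<in> W" for x
      using f_ginv[OF f that] free[OF that] by metis
    obtain n where "(ginv W f ^^ n) q > c" using limit_up[OF ginv_aut[OF f] W qW gq, of c] gfree by blast
    then show ?thesis using inT[of "ginv W f" n] T(4) by blast
  qed
qed

definition nxt :: "real set \<Rightarrow> real \<Rightarrow> real" where
  "nxt T x = Inf {t \<in> T. x < t}"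

definition prv :: "real set \<Rightarrow> real \<Rightarrow> real" where
  "prv T x = Sup {t \<in> T. t < x}"

lemma nxt_props:
  assumes f: "f \<in> Aut_ord W" and W: "closed W" and x: "x \<in> W" "f x \<noteq> x"
    and ex: "\<exists>t\<in>Fix_on W f. t > x"
  shows "nxt (Fix_on W f) x \<in> Fix_on W f" "x < nxt (Fix_on W f) x"
    "\<And>t. t \<in> Fix_on W f \<Longrightarrow> x < t \<Longrightarrow> nxt (Fix_on W f) x \<le> t"
proof -
  define S where "S = {t \<in> Fix_on W f. x < t}"
  have ne: "S \<noteq> {}" using ex by (auto simp: S_def)
  have bdd: "bdd_below S" by (auto simp: S_def bdd_below_def intro!: exI[of _ x])
  have SW: "S \<subseteq> W" by (auto simp: S_def Fix_on_def)
  have LW: "Inf S \<in> W" using closed_subset_contains_Inf[OF W SW ne bdd] .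
  have low: "Inf S \<le> t" if "t \<in> S" for t using cInf_lower[OF that bdd] .
  have fx: "f (Inf S) = Inf S"
  proof (rule FixInf[OF f LW, of S])
    show "s \<in> W \<and> f s = s" if "s \<in> S" for s using that by (auto simp: S_def Fix_on_def)
    show "\<exists>s\<in>S. y > s \<and> s \<ge> Inf S" if "y > Inf S" for y
      using that cInf_less_iff[OF ne bdd, of y] low by force
  qed
  have ge: "x \<le> Inf S" using ne by (auto intro!: cInf_greatest simp: S_def)
  have "Inf S \<noteq> x" using fx x(2) by auto
  then show "x < nxt (Fix_on W f) x" using ge unfolding nxt_def S_def by simp
  show "nxt (Fix_on W f) x \<in> Fix_on W f" using LW fx unfolding nxt_def S_def Fix_on_def by simp
  show "nxt (Fix_on W f) x \<le> t" if "t \<in> Fix_on W f" "x < t" for t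
    using low[of t] that unfolding nxt_def S_def by simp
qed

lemma prv_props:
  assumes f: "f \<in> Aut_ord W" and W: "closed W" and x: "x \<in> W" "f x \<noteq> x"
    and ex: "\<exists>t\<in>Fix_on W f. t < x"
  shows "prv (Fix_on W f) x \<in> Fix_on W f" "prv (Fix_on W f) x < x"
    "\<And>t. t \<in> Fix_on W f \<Longrightarrow> t < x \<Longrightarrow> t \<le> prv (Fix_on W f) x"
proof -
  define S where "S = {t \<in> Fix_on W f. t < x}"
  have ne: "S \<noteq> {}" using ex by (auto simp: S_def)
  have bdd: "bdd_above S" by (auto simp: S_def bdd_above_def intro!: exI[of _ x])
  have SW: "S \<subseteq> W" by (auto simp: S_def Fix_on_def)
  have LW: "Sup S \<in> W" using closed_subset_contains_Sup[OF W SW ne bdd] .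
  have up: "t \<le> Sup S" if "t \<in> S" for t using cSup_upper[OF that bdd] .
  have fx: "f (Sup S) = Sup S"
  proof (rule FixSup[OF f LW, of S])
    show "s \<in> W \<and> f s = s" if "s \<in> S" for s using that by (auto simp: S_def Fix_on_def)
    show "\<exists>s\<in>S. y < s \<and> s \<le> Sup S" if "y < Sup S" for y
      using that less_cSup_iff[OF ne bdd, of y] up by force
  qed
  have le: "Sup S \<le> x" using ne by (auto intro!: cSup_least simp: S_def)
  have "Sup S \<noteq> x" using fx x(2) by auto
  then show "prv (Fix_on W f) x < x" using le unfolding prv_def S_def by simp
  show "prv (Fix_on W f) x \<in> Fix_on W f" using LW fx unfolding prv_def S_def Fix_on_def by simp
  show "t \<le> prv (Fix_on W f) x" if "t \<in> Fix_on W f" "t < x" for t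
    using up[of t] that unfolding prv_def S_def by simp
qed

lemma nxt_eq:
  assumes "t \<in> T" "x < t" "\<And>s. s \<in> T \<Longrightarrow> x < s \<Longrightarrow> t \<le> s"
  shows "nxt T x = t"
  unfolding nxt_def using assms by (intro cInf_eq_minimum) auto

lemma ginv_fix: "f \<in> Aut_ord W \<Longrightarrow> x \<in> W \<Longrightarrow> f x = x \<Longrightarrow> ginv W f x = x"
  using ginv_f[of f W x] by simp

lemma funpow_fix: "f x = x \<Longrightarrow> (f ^^ n) x = x"
  by (induction n) simp_all

lemma funpow_ginv2:
  assumes f: "f \<in> Aut_ord W" and x: "x \<in> W"
  shows "(ginv W f ^^ n) ((f ^^ n) x) = x"
proof -
  have "(f ^^ n) ((ginv W f ^^ n) ((f ^^ n) x)) = (f ^^ n) x"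
    using funpow_ginv[OF f funpow_in[OF f x]] .
  then show ?thesis
    using funpow_inj[OF f funpow_in[OF ginv_aut[OF f] funpow_in[OF f x]] x] by blast
qed

lemma comm_ginv_left:
  assumes f: "f \<in> Aut_ord W" and z: "z \<in> Aut_ord W" and c: "\<And>x. x \<in> W \<Longrightarrow> z (f x) = f (z x)"
    and x: "x \<in> W"
  shows "ginv W z (f x) = f (ginv W z x)"
proof -
  have "z (f (ginv W z x)) = f x" using c[OF ginv_in[OF z x]] f_ginv[OF z x] by simp
  then have "ginv W z (z (f (ginv W z x))) = ginv W z (f x)" by simp
  then show ?thesis using ginv_f[OF z aut_in[OF f ginv_in[OF z x]]] by simp
qed

lemma comm_ginv_right:
  assumes f: "f \<in> Aut_ord W" and z: "z \<in> Aut_ord W" and c: "\<And>x. x \<in> W \<Longrightarrow> z (f x) = f (z x)"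
    and x: "x \<in> W"
  shows "z (ginv W f x) = ginv W f (z x)"
proof -
  have "f (z (ginv W f x)) = z x" using c[OF ginv_in[OF f x]] f_ginv[OF f x] by simp
  then have "ginv W f (f (z (ginv W f x))) = ginv W f (z x)" by simp
  then show ?thesis using ginv_f[OF f aut_in[OF z ginv_in[OF f x]]] by simp
qed

lemma fix_z:
  assumes f: "f \<in> Aut_ord W" and z: "z \<in> Aut_ord W" and c: "\<And>x. x \<in> W \<Longrightarrow> z (f x) = f (z x)"
    and x: "x \<in> Fix_on W f"
  shows "z x \<in> Fix_on W f" "ginv W z x \<in> Fix_on W f"
proof -
  have xW: "x \<in> W" and fx: "f x = x" using x by (auto simp: Fix_on_def)
  show "z x \<in> Fix_on W f" using c[OF xW] fx aut_in[OF z xW] by (simp add: Fix_on_def)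
  show "ginv W z x \<in> Fix_on W f" using comm_ginv_left[OF f z c xW] fx ginv_in[OF z xW]
    by (simp add: Fix_on_def)
qed

primrec chain :: "real set \<Rightarrow> real set \<Rightarrow> real \<Rightarrow> nat \<Rightarrow> real" where
  "chain SA SB x0 0 = x0"
| "chain SA SB x0 (Suc n) = (if even n then nxt SB (chain SA SB x0 n) else nxt SA (chain SA SB x0 n))"

locale ppsetup =
  fixes W :: "real set" and \<alpha> \<beta> z :: "real \<Rightarrow> real" and p q0 :: real
  assumes W: "closed W"
    and a: "\<alpha> \<in> Aut_ord W" and b: "\<beta> \<in> Aut_ord W" and z: "z \<in> Aut_ord W"
    and zfree: "\<And>x. x \<in> W \<Longrightarrow> z x \<noteq> x"
    and za: "\<And>x. x \<in> W \<Longrightarrow> z (\<alpha> x) = \<alpha> (z x)"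
    and zb: "\<And>x. x \<in> W \<Longrightarrow> z (\<beta> x) = \<beta> (z x)"
    and p: "p \<in> W" "\<alpha> p = p" "p < z p"
    and q0: "q0 \<in> W" "\<beta> q0 = q0" "q0 < p"
    and disj: "\<And>x. x \<in> W \<Longrightarrow> \<alpha> x = x \<Longrightarrow> \<beta> x \<noteq> x"
begin

abbreviation "A \<equiv> Fix_on W \<alpha>"
abbreviation "B \<equiv> Fix_on W \<beta>"
abbreviation "zi \<equiv> ginv W z"
abbreviation "e \<equiv> chain A B p"

definition fk :: "nat \<Rightarrow> real \<Rightarrow> real" where "fk k = (if even k then \<beta> else \<alpha>)"
definition Tk :: "nat \<Rightarrow> real set" where "Tk k = Fix_on W (fk k)"
definition lf :: "nat \<Rightarrow> real" where "lf k = prv (Tk k) (e k)"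

lemma fk_aut: "fk k \<in> Aut_ord W" by (simp add: fk_def a b)

lemma fk_comm: "x \<in> W \<Longrightarrow> z (fk k x) = fk k (z x)" by (simp add: fk_def za zb)

lemma A_unb: "\<exists>t\<in>A. t > c"
  using unbounded_up[OF z W zfree, of A p c] fix_z[OF a z za] p by (auto simp: Fix_on_def)

lemma B_unb: "\<exists>t\<in>B. t > c"
  using unbounded_up[OF z W zfree, of B q0 c] fix_z[OF b z zb] q0 by (auto simp: Fix_on_def)

lemma Tk_unb: "\<exists>t\<in>Tk k. t > c"
  using A_unb B_unb by (simp add: Tk_def fk_def)

lemma pA: "p \<in> A" using p by (simp add: Fix_on_def)
lemma q0B: "q0 \<in> B" using q0 by (simp add: Fix_on_def)

lemma e_Suc: "e (Suc n) = nxt (Tk n) (e n)"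
  by (simp add: Tk_def fk_def)

lemma e_basic: "e n \<in> W \<and> (even n \<longrightarrow> e n \<in> A) \<and> (odd n \<longrightarrow> e n \<in> B)"
proof (induction n)
  case 0 then show ?case using pA p by simp
next
  case (Suc n)
  have eW: "e n \<in> W" using Suc by simp
  have nf: "fk n (e n) \<noteq> e n"
    using Suc disj[OF eW] by (cases "even n") (auto simp: fk_def Fix_on_def)
  have "nxt (Tk n) (e n) \<in> Tk n"
    using nxt_props(1)[OF fk_aut W eW nf] Tk_unb by (simp add: Tk_def)
  then show ?case unfolding e_Suc by (auto simp: Tk_def fk_def Fix_on_def)
qed

lemma eW: "e n \<in> W" using e_basic by blast

lemma e_notT: "e n \<notin> Tk n"
  using e_basic[of n] disj[OF eW[of n]] by (cases "even n") (auto simp: Tk_def fk_def Fix_on_def)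

lemma e_nf: "fk n (e n) \<noteq> e n"
  using e_notT eW by (auto simp: Tk_def Fix_on_def)

lemma e_step: "e (Suc n) \<in> Tk n" "e n < e (Suc n)" "\<And>t. t \<in> Tk n \<Longrightarrow> e n < t \<Longrightarrow> e (Suc n) \<le> t"
  using nxt_props[OF fk_aut W eW e_nf] Tk_unb unfolding e_Suc Tk_def by auto

lemma e_Suc_T: "e (Suc n) \<in> Tk (Suc (Suc n))"
  using e_step(1)[of n] by (simp add: Tk_def fk_def)

lemma e_mono: assumes "n \<le> m" shows "e n \<le> e m"
proof -
  have "\<And>n. e n \<le> e (Suc n)" using e_step(2) less_imp_le by blast
  then show ?thesis using lift_Suc_mono_le[of "chain A B p" n m] assms by blast
qed

lemma e_smono: assumes "n < m" shows "e n < e m"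
proof -
  have "\<And>n. e n < e (Suc n)" using e_step(2) by blast
  then show ?thesis using lift_Suc_mono_less[of "chain A B p" n m] assms by blast
qed

lemma e_ge_p: "p \<le> e n" using e_mono[of 0 n] by simp

lemma Tk_below: "\<exists>t\<in>Tk k. t < e k"
proof (cases "even k")
  case True
  have "q0 < e k" using q0(3) e_ge_p[of k] by simp
  then show ?thesis using True q0B unfolding Tk_def fk_def by auto
next
  case False
  then have "e k \<in> B" using e_basic by blast
  then have "p \<noteq> e k" using disj[OF p(1) p(2)] by (auto simp: Fix_on_def)
  then have "p < e k" using e_ge_p[of k] by simp
  then have "\<exists>t\<in>A. t < e k" using pA by blast
  then show ?thesis using False unfolding Tk_def fk_def by simp
qed

lemma lf_props: "lf k \<in> Tk k" "lf k < e k" "\<And>t. t \<in> Tk k \<Longrightarrow> t < e k \<Longrightarrow> t \<le> lf k"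
  using prv_props[OF fk_aut W eW e_nf Tk_below[unfolded Tk_def]] unfolding lf_def Tk_def by auto

lemma lfW: "lf k \<in> W" using lf_props(1) by (simp add: Tk_def Fix_on_def)

lemma lf_ge: "e k \<le> lf (Suc k)"
  using lf_props(3)[where k="Suc k" and t="e k"] e_basic[of k] e_step(2)[of k]
  by (cases "even k") (auto simp: Tk_def fk_def)

lemma lf_ge_p: "p \<le> lf (Suc k)" using lf_ge[of k] e_ge_p[of k] by simp

lemma arc_free:
  assumes y: "y \<in> W" "lf k < y" "y < e (Suc k)" shows "fk k y \<noteq> y"
proof
  assume fy: "fk k y = y"
  then have yT: "y \<in> Tk k" using y by (simp add: Tk_def Fix_on_def)
  show False
  proof (cases "y < e k")
    case True then show False using lf_props(3)[OF yT] y by simp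
  next
    case False
    show False
    proof (cases "y = e k")
      case True then show False using e_notT yT by simp
    next
      case False
      then have "e k < y" using \<open>\<not> y < e k\<close> by simp
      then show False using e_step(3)[OF yT] y by simp
    qed
  qed
qed

end

context ppsetup begin

declare chain.simps(2)[simp del]

lemma zA: "x \<in> A \<Longrightarrow> z x \<in> A" "x \<in> A \<Longrightarrow> zi x \<in> A" using fix_z[OF a z za] by auto
lemma zB: "x \<in> B \<Longrightarrow> z x \<in> B" "x \<in> B \<Longrightarrow> zi x \<in> B" using fix_z[OF b z zb] by auto

lemma terminates: "\<exists>n. z p < e n"
proof (rule ccontr)
  assume "\<not> ?thesis"
  then have bd: "\<And>n. e n \<le> z p" by (simp add: not_less)
  define S where "S = range e"
  have SW: "S \<subseteq> W" using eW by (auto simp: S_def)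
  have bdd: "bdd_above S" using bd by (auto simp: S_def bdd_above_def)
  have ne: "S \<noteq> {}" by (simp add: S_def)
  define L where "L = Sup S"
  have LW: "L \<in> W" unfolding L_def using closed_subset_contains_Sup[OF W SW ne bdd] .
  have le: "e n \<le> L" for n unfolding L_def using bdd by (auto intro: cSup_upper simp: S_def)
  have apx: "\<exists>n. y < e n" if "y < L" for y
    using less_cSupD[OF ne, of y] that unfolding L_def S_def by auto
  have par: "\<exists>k. (even k = ev) \<and> y < e k \<and> e k \<le> L" if yL: "y < L" for y ev
  proof -
    obtain n where n: "y < e n" using apx[OF yL] by blast
    define k where "k = (if (even n = ev) then n else Suc n)"
    have "even k = ev" by (simp add: k_def)
    moreover have "e n \<le> e k" using e_mono[of n k] by (simp add: k_def)
    ultimately show ?thesis using n le[of k] by force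
  qed
  have aL: "\<alpha> L = L"
  proof (rule FixSup[OF a LW, of "{e n | n. even n}"])
    show "s \<in> W \<and> \<alpha> s = s" if "s \<in> {e n | n. even n}" for s
      using that e_basic by (auto simp: Fix_on_def)
    show "\<exists>s\<in>{e n | n. even n}. y < s \<and> s \<le> L" if "y < L" for y
      using par[OF that, of True] by blast
  qed
  have bL: "\<beta> L = L"
  proof (rule FixSup[OF b LW, of "{e n | n. odd n}"])
    show "s \<in> W \<and> \<beta> s = s" if "s \<in> {e n | n. odd n}" for s
      using that e_basic by (auto simp: Fix_on_def)
    show "\<exists>s\<in>{e n | n. odd n}. y < s \<and> s \<le> L" if "y < L" for y
      using par[OF that, of False] by blast
  qed
  show False using disj[OF LW aL] bL by simp
qed

definition P0 :: nat where "P0 = (LEAST n. z p < e n)"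
definition Q :: nat where "Q = P0 - 1"

lemma P0: "z p < e P0" unfolding P0_def using LeastI_ex[OF terminates] .

lemma P0_pos: "P0 \<noteq> 0"
proof
  assume "P0 = 0"
  then have "z p < p" using P0 by simp
  then show False using p(3) by simp
qed

lemma Q_Suc: "Suc Q = P0" using P0_pos by (simp add: Q_def)

lemma Q_gt: "z p < e (Suc Q)" using P0 Q_Suc by simp

lemma Q_le: "e Q \<le> z p"
proof -
  have "Q < P0" using Q_Suc by simp
  then have "\<not> z p < e Q" unfolding P0_def by (rule not_less_Least)
  then show ?thesis by simp
qed

lemma zpW: "z p \<in> W" using aut_in[OF z p(1)] .

lemma Q_even: "even Q"
proof (rule ccontr)
  assume o: "odd Q"
  have zpA: "z p \<in> A" using zA(1)[OF pA] .
  have "e Q \<in> B" using e_basic o by blast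
  then have "e Q \<noteq> z p" using zpA disj[OF zpW] by (auto simp: Fix_on_def)
  then have lt: "e Q < z p" using Q_le by simp
  have "z p \<in> Tk Q" using zpA o by (simp add: Tk_def fk_def)
  then have "e (Suc Q) \<le> z p" using e_step(3)[OF _ lt] by blast
  then show False using Q_gt by simp
qed

lemma TkQ: "Tk Q = B" using Q_even by (simp add: Tk_def fk_def)

lemma e1: "e 1 \<in> B" "p < e 1" "\<And>t. t \<in> B \<Longrightarrow> p < t \<Longrightarrow> e 1 \<le> t"
  using e_step[where n=0] by (auto simp: Tk_def fk_def)

lemma e_per: "e (Suc Q) = z (e 1)"
proof -
  have e1W: "e 1 \<in> W" using eW .
  have "nxt (Tk Q) (e Q) = z (e 1)"
  proof (rule nxt_eq)
    show "z (e 1) \<in> Tk Q" using zB(1)[OF e1(1)] TkQ by simp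
    have "z p < z (e 1)" using aut_less[OF z p(1) e1W] e1(2) by simp
    then show "e Q < z (e 1)" using Q_le by simp
    fix s assume s: "s \<in> Tk Q" "e Q < s"
    have sW: "s \<in> W" using s(1) by (simp add: Tk_def Fix_on_def)
    have "z p < s"
    proof (rule ccontr)
      assume "\<not> z p < s"
      then have "e (Suc Q) \<le> s" "s \<le> z p" using e_step(3)[OF s] by simp_all
      then show False using Q_gt by simp
    qed
    then have "p < zi s" using aut_less[OF z p(1) ginv_in[OF z sW]] f_ginv[OF z sW] by simp
    moreover have "zi s \<in> B" using zB(2) s(1) TkQ by simp
    ultimately have "e 1 \<le> zi s" using e1(3) by blast
    then show "z (e 1) \<le> s" using aut_le[OF z e1W ginv_in[OF z sW]] f_ginv[OF z sW] by simp
  qed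
  then show ?thesis using e_Suc[of Q] by simp
qed

lemma Q_ge2: "2 \<le> Q"
proof (rule ccontr)
  assume "\<not> 2 \<le> Q"
  then have "Q = 0 \<or> Q = 1" by auto
  then have "Q = 0" using Q_even by auto
  then have "e 1 = z (e 1)" using e_per by simp
  then show False using zfree[OF eW[of 1]] by simp
qed

definition m0 :: "nat \<Rightarrow> real" where
  "m0 j = (SOME u. u \<in> W \<and> lf (Suc j) < u \<and> u < e (Suc j))"

lemma m0_ex: "\<exists>u. u \<in> W \<and> lf (Suc j) < u \<and> u < e (Suc j)"
proof -
  define G where "G = fk j"
  have G: "G \<in> Aut_ord W" using fk_aut by (simp add: G_def)
  define x where "x = lf (Suc j)"
  have xW: "x \<in> W" using lfW by (simp add: x_def)
  have x1: "lf j < x" using lf_props(2)[of j] lf_ge[of j] by (simp add: x_def)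
  have x2: "x < e (Suc j)" using lf_props(2)[of "Suc j"] by (simp add: x_def)
  have Gx: "G x \<noteq> x" using arc_free[OF xW x1 x2] by (simp add: G_def)
  have eW': "e (Suc j) \<in> W" using eW .
  have Ge: "G (e (Suc j)) = e (Suc j)" using e_step(1)[of j] by (simp add: G_def Tk_def Fix_on_def)
  show ?thesis
  proof (cases "G x > x")
    case True
    have "G x < G (e (Suc j))" using aut_less[OF G xW eW'] x2 by simp
    then show ?thesis using True aut_in[OF G xW] Ge by (auto simp: x_def)
  next
    case False
    then have "G x < x" using Gx by simp
    then have gx: "x < ginv W G x" using aut_less[OF G xW ginv_in[OF G xW]] f_ginv[OF G xW] by simp
    have "ginv W G x < ginv W G (e (Suc j))" using aut_less[OF ginv_aut[OF G] xW eW'] x2 by simp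
    then have "ginv W G x < e (Suc j)" using ginv_fix[OF G eW' Ge] by simp
    then show ?thesis using gx ginv_in[OF G xW] by (auto simp: x_def)
  qed
qed

lemma m0_props: "m0 j \<in> W" "lf (Suc j) < m0 j" "m0 j < e (Suc j)"
  using someI_ex[OF m0_ex[of j]] unfolding m0_def by auto

definition m :: "nat \<Rightarrow> real" where "m j = (if j = Q then z (m0 0) else m0 j)"

lemma m_lt: "j < Q \<Longrightarrow> m j = m0 j" by (simp add: m_def)
lemma mQ: "m Q = z (m 0)" using Q_ge2 by (simp add: m_def)

lemma m_props: "j < Q \<Longrightarrow> m j \<in> W" "j < Q \<Longrightarrow> lf (Suc j) < m j" "j < Q \<Longrightarrow> m j < e (Suc j)"
  using m0_props m_lt by auto

lemma m0W: "m 0 \<in> W" using m_props Q_ge2 by simp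

lemma mW: "j \<le> Q \<Longrightarrow> m j \<in> W"
  using m_props(1)[of j] mQ aut_in[OF z m0W] by (cases "j = Q") auto

lemma lo_in: "1 \<le> k \<Longrightarrow> k \<le> Q \<Longrightarrow> lf k < m (k - 1)"
  using m_props(2)[of "k - 1"] by simp

lemma m_lt_e: "i < Q \<Longrightarrow> m i < e (Suc i)" using m_props(3) .

lemma lf1: "p \<le> lf 1" using lf_ge_p[of 0] by simp

lemma e_lt_m: assumes "1 \<le> k" "k \<le> Q" shows "e k < m k"
proof (cases "k = Q")
  case True
  have lm: "lf 1 < m 0" using m_props(2)[of 0] Q_ge2 by simp
  have "z p \<le> z (lf 1)" using aut_le[OF z p(1) lfW] lf1 by simp
  also have "\<dots> < z (m 0)" using aut_less[OF z lfW m0W] lm by simp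
  finally show ?thesis using True mQ Q_le by simp
next
  case False
  then have "k < Q" using assms by simp
  then show ?thesis using m_props(2)[of k] lf_ge[of k] by simp
qed

lemma hi_in: assumes "1 \<le> k" "k \<le> Q" shows "m k < e (Suc k)"
proof (cases "k = Q")
  case True
  have "m 0 < e 1" using m_props(3)[of 0] Q_ge2 by simp
  then have "z (m 0) < z (e 1)" using aut_less[OF z m0W eW[of 1]] by simp
  then show ?thesis using True mQ e_per by simp
next
  case False
  then show ?thesis using m_props(3)[of k] assms by simp
qed

lemma lo_lt_hi: assumes "1 \<le> k" "k \<le> Q" shows "m (k - 1) < m k"
proof -
  have "k - 1 < Q" using assms by simp
  then have "m (k - 1) < e (Suc (k - 1))" using m_lt_e by blast
  then have "m (k - 1) < e k" using assms(1) by simp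
  then show ?thesis using e_lt_m[OF assms] by simp
qed

end

context ppsetup begin

declare chain.simps(2)[simp del]

definition gm :: "bool \<Rightarrow> bool \<Rightarrow> real \<Rightarrow> real" where
  "gm a ee = (if a then (if ee then \<alpha> else ginv W \<alpha>) else (if ee then \<beta> else ginv W \<beta>))"

definition dir :: "nat \<Rightarrow> bool" where "dir k = (fk k (m (k - 1)) > m (k - 1))"
definition up :: "nat \<Rightarrow> real \<Rightarrow> real" where "up k = gm (odd k) (dir k)"
definition dn :: "nat \<Rightarrow> real \<Rightarrow> real" where "dn k = gm (odd k) (\<not> dir k)"

lemma gm_odd: "gm (odd k) ee = (if ee then fk k else ginv W (fk k))"
  by (simp add: gm_def fk_def)

lemma gm_aut: "gm a ee \<in> Aut_ord W"
  by (simp add: gm_def a b ginv_aut)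

lemma up_aut: "up k \<in> Aut_ord W" by (simp add: up_def gm_aut)
lemma dn_aut: "dn k \<in> Aut_ord W" by (simp add: dn_def gm_aut)

lemma gm_comm: "y \<in> W \<Longrightarrow> gm a ee (z y) = z (gm a ee y)"
  using za zb comm_ginv_right[OF a z za] comm_ginv_right[OF b z zb]
  by (simp add: gm_def)

lemma gm_fix: "t \<in> Tk k \<Longrightarrow> gm (odd k) ee t = t"
  using ginv_fix[OF fk_aut] by (auto simp: gm_odd Tk_def Fix_on_def)

lemma gm_nofix: "y \<in> W \<Longrightarrow> gm (odd k) ee y = y \<Longrightarrow> fk k y = y"
  using f_ginv[OF fk_aut, of y k] by (auto simp: gm_odd split: if_splits)

lemma lo_W: "1 \<le> k \<Longrightarrow> k \<le> Q \<Longrightarrow> m (k - 1) \<in> W" using mW by simp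

lemma up_lo: assumes k: "1 \<le> k" "k \<le> Q" shows "up k (m (k - 1)) > m (k - 1)"
proof -
  define lo where "lo = m (k - 1)"
  have loW: "lo \<in> W" using lo_W[OF k] by (simp add: lo_def)
  have "lo < m k" using lo_lt_hi[OF k] by (simp add: lo_def)
  then have "lo < e (Suc k)" using hi_in[OF k] by simp
  then have nf: "fk k lo \<noteq> lo" using arc_free[OF loW lo_in[OF k, folded lo_def]] by simp
  show ?thesis
  proof (cases "dir k")
    case True then show ?thesis by (simp add: up_def gm_odd dir_def)
  next
    case False
    then have "\<not> fk k lo > lo" by (simp add: dir_def lo_def)
    then have "fk k lo < lo" using nf by simp
    then have "lo < ginv W (fk k) lo"
      using aut_less[OF fk_aut[of k] loW ginv_in[OF fk_aut[of k] loW]] f_ginv[OF fk_aut[of k] loW] by simp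
    then show ?thesis using False by (simp add: up_def gm_odd lo_def)
  qed
qed

lemma Nk_ex: assumes k: "1 \<le> k" "k \<le> Q" shows "\<exists>n. (up k ^^ n) (m (k - 1)) > m k"
proof (rule limit_up[OF up_aut W lo_W[OF k] up_lo[OF k]])
  fix y assume y: "y \<in> W" "m (k - 1) \<le> y" "y \<le> m k"
  have "lf k < y" using lo_in[OF k] y by simp
  moreover have "y < e (Suc k)" using hi_in[OF k] y by simp
  ultimately have "fk k y \<noteq> y" using arc_free[OF y(1)] by blast
  then show "up k y \<noteq> y" using gm_nofix[OF y(1)] by (auto simp: up_def)
qed

definition Nk :: "nat \<Rightarrow> nat" where "Nk k = (LEAST n. (up k ^^ n) (m (k - 1)) > m k)"
definition N :: nat where "N = Max (Nk ` {1..Q})"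

lemma up_N: assumes k: "1 \<le> k" "k \<le> Q" shows "(up k ^^ N) (m (k - 1)) > m k"
proof -
  have "Nk k \<le> N" unfolding N_def using k by (intro Max_ge) auto
  moreover have "(up k ^^ Nk k) (m (k - 1)) > m k" unfolding Nk_def using LeastI_ex[OF Nk_ex[OF k]] .
  ultimately show ?thesis using funpow_incr[OF up_aut lo_W[OF k] up_lo[OF k], of "Nk k" N] by simp
qed

lemma up_dn_inv: assumes "y \<in> W" shows "(dn k ^^ n) ((up k ^^ n) y) = y"
proof (cases "dir k")
  case True then show ?thesis using funpow_ginv2[OF fk_aut assms] by (simp add: up_def dn_def gm_odd)
next
  case False then show ?thesis using funpow_ginv[OF fk_aut assms] by (simp add: up_def dn_def gm_odd)
qed

lemma updn_fix: "t \<in> Tk k \<Longrightarrow> (up k ^^ n) t = t" "t \<in> Tk k \<Longrightarrow> (dn k ^^ n) t = t"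
  unfolding up_def dn_def by (rule funpow_fix, erule gm_fix)+

lemma TkW: "t \<in> Tk k \<Longrightarrow> t \<in> W" by (simp add: Tk_def Fix_on_def)

lemma AM1: assumes k: "1 \<le> k" "k \<le> Q" and y: "y \<in> W" "m (k - 1) \<le> y" "y < e (Suc k)"
  shows "m k < (up k ^^ N) y" "(up k ^^ N) y < e (Suc k)"
proof -
  have "(up k ^^ N) (m (k - 1)) \<le> (up k ^^ N) y" using funpow_le[OF up_aut lo_W[OF k] y(1)] y(2) by simp
  then show "m k < (up k ^^ N) y" using up_N[OF k] by simp
  have eT: "e (Suc k) \<in> Tk k" using e_step(1) .
  have "(up k ^^ N) y < (up k ^^ N) (e (Suc k))" using funpow_less[OF up_aut y(1) TkW[OF eT]] y(3) by simp
  then show "(up k ^^ N) y < e (Suc k)" using updn_fix(1)[OF eT] by simp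
qed

lemma AM2: assumes k: "1 \<le> k" "k \<le> Q" and y: "y \<in> W" "lf k < y" "y \<le> m k"
  shows "lf k < (dn k ^^ N) y" "(dn k ^^ N) y < m (k - 1)"
proof -
  have hW: "m k \<in> W" using mW k by simp
  have loW: "m (k - 1) \<in> W" using lo_W[OF k] .
  have uW: "(up k ^^ N) (m (k - 1)) \<in> W" using funpow_in[OF up_aut loW] .
  have "(dn k ^^ N) y \<le> (dn k ^^ N) (m k)" using funpow_le[OF dn_aut y(1) hW] y(3) by simp
  also have "\<dots> < (dn k ^^ N) ((up k ^^ N) (m (k - 1)))"
    using funpow_less[OF dn_aut hW uW] up_N[OF k] by simp
  also have "\<dots> = m (k - 1)" using up_dn_inv[OF loW] .
  finally show "(dn k ^^ N) y < m (k - 1)" .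
  have lT: "lf k \<in> Tk k" using lf_props(1) .
  have "(dn k ^^ N) (lf k) < (dn k ^^ N) y" using funpow_less[OF dn_aut TkW[OF lT] y(1)] y(2) by simp
  then show "lf k < (dn k ^^ N) y" using updn_fix(2)[OF lT] by simp
qed

definition act :: "bool \<Rightarrow> bool \<Rightarrow> real \<Rightarrow> real" where "act a ee = gm a ee ^^ N"

lemma act_W: "y \<in> W \<Longrightarrow> act a ee y \<in> W" using funpow_in[OF gm_aut] by (simp add: act_def)

lemma act_comm: assumes "y \<in> W" shows "act a ee (z y) = z (act a ee y)"
  using funpow_commute[OF _ z gm_aut assms, of a ee N 1] gm_comm by (simp add: act_def)

lemma act_up: "act (odd k) (dir k) = up k ^^ N" by (simp add: act_def up_def)
lemma act_dn: "act (odd k) (\<not> dir k) = dn k ^^ N" by (simp add: act_def dn_def)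

end

context ppsetup begin

declare chain.simps(2)[simp del]

definition Orb :: "real set \<Rightarrow> real set" where
  "Orb S = {x \<in> W. \<exists>y\<in>S. \<exists>i j. (z ^^ i) x = (z ^^ j) y}"

lemma O1: "S \<subseteq> W \<Longrightarrow> S \<subseteq> Orb S"
  unfolding Orb_def by (auto intro!: exI[of _ 0])

lemma O2: assumes "x \<in> W" "z x \<in> Orb S" shows "x \<in> Orb S"
proof -
  obtain y i j where "y \<in> S" "(z ^^ i) (z x) = (z ^^ j) y" using assms(2) unfolding Orb_def by blast
  then have "(z ^^ Suc i) x = (z ^^ j) y" by (simp only: funpow_Suc')
  then show ?thesis using assms(1) \<open>y \<in> S\<close> unfolding Orb_def by blast
qed

lemma O2b: assumes "y \<in> S" "x \<in> W" "x = z y" shows "x \<in> Orb S"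
proof -
  have "(z ^^ 0) x = (z ^^ 1) y" using assms(3) by simp
  then show ?thesis using assms unfolding Orb_def by blast
qed

lemma funpow_add_comm: "(f ^^ a) ((f ^^ b) x) = (f ^^ b) ((f ^^ a) x)"
  by (metis add.commute comp_apply funpow_add)

lemma funpow_add_app: "(f ^^ a) ((f ^^ b) x) = (f ^^ (a + b)) x"
  by (simp add: funpow_add)

lemma O3:
  assumes FW: "\<And>y. y \<in> W \<Longrightarrow> F y \<in> W" and Fc: "\<And>y. y \<in> W \<Longrightarrow> F (z y) = z (F y)"
    and base: "\<And>y. y \<in> S' \<Longrightarrow> F y \<in> Orb S" and S': "S' \<subseteq> W"
    and x: "x \<in> Orb S'"
  shows "F x \<in> Orb S"
proof -
  have Fn: "F ((z ^^ n) u) = (z ^^ n) (F u)" if "u \<in> W" for u n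
    using that by (induction n) (simp_all add: Fc funpow_in[OF z])
  obtain y i j where xy: "x \<in> W" "y \<in> S'" "(z ^^ i) x = (z ^^ j) y" using x unfolding Orb_def by blast
  have yW: "y \<in> W" using S' xy(2) by blast
  obtain w c d where w: "w \<in> S" "(z ^^ c) (F y) = (z ^^ d) w" using base[OF xy(2)] unfolding Orb_def by blast
  have "(z ^^ (c + i)) (F x) = (z ^^ c) ((z ^^ i) (F x))" by (simp add: funpow_add_app)
  also have "\<dots> = (z ^^ c) (F ((z ^^ i) x))" using Fn[OF xy(1)] by simp
  also have "\<dots> = (z ^^ c) (F ((z ^^ j) y))" using xy(3) by simp
  also have "\<dots> = (z ^^ c) ((z ^^ j) (F y))" using Fn[OF yW] by simp
  also have "\<dots> = (z ^^ j) ((z ^^ c) (F y))" by (rule funpow_add_comm)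
  also have "\<dots> = (z ^^ (j + d)) w" using w(2) by (simp add: funpow_add_app)
  finally show ?thesis using FW[OF xy(1)] w(1) unfolding Orb_def by blast
qed

lemma FD:
  assumes y1: "y1 \<in> W" "p < y1" "y1 < z p" and y2: "y2 \<in> W" "p < y2" "y2 < z p"
    and eq: "(z ^^ i) y1 = (z ^^ j) y2"
  shows "y1 = y2"
proof -
  have gen: "u = v" if u: "u \<in> W" "u < z p" and v: "v \<in> W" "p < v" and uv: "(z ^^ i') u = (z ^^ j') v"
    and ij: "i' \<le> j'" for u v i' j'
  proof -
    define d where "d = j' - i'"
    have "(z ^^ j') v = (z ^^ i') ((z ^^ d) v)" using ij by (simp add: d_def funpow_add_app)
    then have "u = (z ^^ d) v" using funpow_inj[OF z u(1) funpow_in[OF z v(1)]] uv by simp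
    moreover have "d = 0"
    proof (rule ccontr)
      assume "d \<noteq> 0"
      then have "(z ^^ 1) p \<le> (z ^^ d) p" using funpow_incr[OF z p(1) p(3), of 1 d] by simp
      moreover have "(z ^^ d) p < (z ^^ d) v" using funpow_less[OF z p(1) v(1)] v(2) by simp
      ultimately show False using \<open>u = (z ^^ d) v\<close> u(2) by simp
    qed
    ultimately show ?thesis by simp
  qed
  show ?thesis
  proof (cases "i \<le> j")
    case True then show ?thesis using gen[OF y1(1) y1(3) y2(1) y2(2) eq] by simp
  next
    case False then show ?thesis using gen[OF y2(1) y2(3) y1(1) y1(2) eq[symmetric]] by simp
  qed
qed

lemma O4: assumes S: "S \<subseteq> {y \<in> W. p < y \<and> y < z p}" and x: "x \<in> W" "p < x" "x < z p" "x \<in> Orb S"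
  shows "x \<in> S"
proof -
  obtain y i j where y: "y \<in> S" "(z ^^ i) x = (z ^^ j) y" using x(4) unfolding Orb_def by blast
  have "x = y" using FD[OF x(1-3) _ _ _ y(2)] S y(1) by blast
  then show ?thesis using y(1) by simp
qed

lemma O5: assumes S1: "S1 \<subseteq> {y \<in> W. p < y \<and> y < z p}" and S2: "S2 \<subseteq> {y \<in> W. p < y \<and> y < z p}"
  and x: "x \<in> Orb S1" "x \<in> Orb S2"
  shows "\<exists>y. y \<in> S1 \<and> y \<in> S2"
proof -
  obtain y1 i j where y1: "y1 \<in> S1" "(z ^^ i) x = (z ^^ j) y1" using x(1) unfolding Orb_def by blast
  obtain y2 c d where y2: "y2 \<in> S2" "(z ^^ c) x = (z ^^ d) y2" using x(2) unfolding Orb_def by blast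
  have "(z ^^ (c + j)) y1 = (z ^^ c) ((z ^^ j) y1)" by (simp add: funpow_add_app)
  also have "\<dots> = (z ^^ c) ((z ^^ i) x)" using y1(2) by simp
  also have "\<dots> = (z ^^ i) ((z ^^ c) x)" by (rule funpow_add_comm)
  also have "\<dots> = (z ^^ (i + d)) y2" using y2(2) by (simp add: funpow_add_app)
  finally have "y1 = y2" using FD S1 S2 y1(1) y2(1) by blast
  then show ?thesis using y1 y2 by blast
qed

definition R :: "nat \<Rightarrow> real set" where "R j = {y \<in> W. m j < y \<and> y < e (Suc j)}"
definition L :: "nat \<Rightarrow> real set" where "L j = {y \<in> W. lf j < y \<and> y < m (j - 1)}"
definition letR :: "nat \<Rightarrow> bool \<times> bool" where "letR j = (odd j, if j = 0 then dir Q else dir j)"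
definition letL :: "nat \<Rightarrow> bool \<times> bool" where "letL j = (odd j, \<not> dir j)"
definition Z :: "bool \<Rightarrow> bool \<Rightarrow> real set" where
  "Z a ee = {y. (\<exists>j<Q. y \<in> R j \<and> letR j = (a, ee)) \<or> (\<exists>j. 1 \<le> j \<and> j \<le> Q \<and> y \<in> L j \<and> letL j = (a, ee))}"
definition X :: "bool \<Rightarrow> bool \<Rightarrow> real set" where "X a ee = Orb (Z a ee)"

lemma eQ_zp: "k \<le> Q \<Longrightarrow> e k \<le> z p" using e_mono[of k Q] Q_le by simp

lemma ZR_int: assumes "j < Q" "y \<in> R j"
  shows "y \<in> W" "e j < y" "y < e (Suc j)" "p < y" "y < z p"
proof -
  show "y \<in> W" "y < e (Suc j)" using assms(2) by (auto simp: R_def)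
  have "e j \<le> lf (Suc j)" using lf_ge .
  then show "e j < y" using m_props(2)[OF assms(1)] assms(2) by (auto simp: R_def)
  then show "p < y" using e_ge_p[of j] by simp
  show "y < z p" using \<open>y < e (Suc j)\<close> eQ_zp[of "Suc j"] assms(1) by simp
qed

lemma ZL_int: assumes "1 \<le> j" "j \<le> Q" "y \<in> L j"
  shows "y \<in> W" "e (j - 1) < y" "y < e j" "p < y" "y < z p"
proof -
  show "y \<in> W" using assms(3) by (auto simp: L_def)
  have "e (j - 1) \<le> lf (Suc (j - 1))" using lf_ge .
  then show "e (j - 1) < y" using assms by (auto simp: L_def)
  then show "p < y" using e_ge_p[of "j - 1"] by simp
  have "j - 1 < Q" using assms by simp
  then have "m (j - 1) < e (Suc (j - 1))" using m_lt_e by blast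
  then show "y < e j" using assms by (auto simp: L_def)
  then show "y < z p" using eQ_zp[of j] assms by simp
qed

lemma Z_sub: "Z a ee \<subseteq> {y \<in> W. p < y \<and> y < z p}"
  unfolding Z_def using ZR_int ZL_int by blast

lemma ZW: "Z a ee \<subseteq> W" using Z_sub by blast

lemma intervals: assumes "e i < y" "y < e (Suc i)" "e i' < y" "y < e (Suc i')" shows "i = i'"
proof (rule ccontr)
  assume "i \<noteq> i'"
  then have "Suc i \<le> i' \<or> Suc i' \<le> i" by auto
  then show False using e_mono[of "Suc i" i'] e_mono[of "Suc i'" i] assms by auto
qed

end

context ppsetup begin

declare chain.simps(2)[simp del]

lemma Q_odd_F: "odd Q = False" using Q_even by simp

lemma RX: assumes k: "1 \<le> k" "k \<le> Q" shows "R k \<subseteq> X (odd k) (dir k)"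
proof (cases "k = Q")
  case False
  then have kQ: "k < Q" using k by simp
  have "R k \<subseteq> Z (odd k) (dir k)"
  proof
    fix y assume y: "y \<in> R k"
    have "letR k = (odd k, dir k)" using k by (simp add: letR_def)
    then have "\<exists>j<Q. y \<in> R j \<and> letR j = (odd k, dir k)" using kQ y by blast
    then show "y \<in> Z (odd k) (dir k)" unfolding Z_def by blast
  qed
  then show ?thesis unfolding X_def using O1[OF ZW] by blast
next
  case True
  show ?thesis
  proof
    fix y assume y: "y \<in> R k"
    have yW: "y \<in> W" and y1: "m k < y" and y2: "y < e (Suc k)" using y by (auto simp: R_def)
    have ziW: "zi y \<in> W" using ginv_in[OF z yW] .
    have zzi: "z (zi y) = y" using f_ginv[OF z yW] .
    have "z (m 0) < z (zi y)" using y1 True mQ zzi by simp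
    then have a1: "m 0 < zi y" using aut_less[OF z m0W ziW] by simp
    have "z (zi y) < z (e 1)" using y2 True e_per zzi by simp
    then have a2: "zi y < e 1" using aut_less[OF z ziW eW[of 1]] by simp
    have "zi y \<in> R 0" using a1 a2 ziW by (simp add: R_def)
    moreover have "letR 0 = (False, dir Q)" by (simp add: letR_def)
    moreover have "0 < Q" using Q_ge2 by simp
    ultimately have "\<exists>j<Q. zi y \<in> R j \<and> letR j = (False, dir Q)" by blast
    then have "zi y \<in> Z False (dir Q)" unfolding Z_def by blast
    then have "y \<in> Orb (Z False (dir Q))" using O2b[OF _ yW zzi[symmetric]] by blast
    then show "y \<in> X (odd k) (dir k)" unfolding X_def using True Q_odd_F by simp
  qed
qed

lemma LX: assumes k: "1 \<le> k" "k \<le> Q" shows "L k \<subseteq> X (odd k) (\<not> dir k)"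
proof -
  have "L k \<subseteq> Z (odd k) (\<not> dir k)"
  proof
    fix y assume y: "y \<in> L k"
    have "letL k = (odd k, \<not> dir k)" by (simp add: letL_def)
    then have "\<exists>j. 1 \<le> j \<and> j \<le> Q \<and> y \<in> L j \<and> letL j = (odd k, \<not> dir k)" using k y by blast
    then show "y \<in> Z (odd k) (\<not> dir k)" unfolding Z_def by blast
  qed
  then show ?thesis unfolding X_def using O1[OF ZW] by blast
qed

lemma Reg: assumes k: "1 \<le> k" "k \<le> Q" and y: "y \<in> W" "m (k - 1) \<le> y" "y \<le> m k"
  shows "act (odd k) ee y \<in> X (odd k) ee"
proof (cases "ee = dir k")
  case True
  have yl: "y < e (Suc k)" using y(3) hi_in[OF k] by simp
  have u: "m k < (up k ^^ N) y" "(up k ^^ N) y < e (Suc k)" using AM1[OF k y(1,2) yl] by auto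
  have eq: "act (odd k) ee y = (up k ^^ N) y" using True act_up[of k] by simp
  have "act (odd k) ee y \<in> R k" unfolding eq R_def using u funpow_in[OF up_aut y(1)] by blast
  then show ?thesis using RX[OF k] True by blast
next
  case False
  then have ee: "ee = (\<not> dir k)" by simp
  have yl: "lf k < y" using lo_in[OF k] y(2) by simp
  have u: "lf k < (dn k ^^ N) y" "(dn k ^^ N) y < m (k - 1)" using AM2[OF k y(1) yl y(3)] by auto
  have eq: "act (odd k) ee y = (dn k ^^ N) y" using ee act_dn[of k] by simp
  have "act (odd k) ee y \<in> L k" unfolding eq L_def using u funpow_in[OF dn_aut y(1)] by blast
  then show ?thesis using LX[OF k] ee by blast
qed

lemma SelfR: assumes k: "1 \<le> k" "k \<le> Q" and y: "y \<in> R k"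
  shows "act (odd k) (dir k) y \<in> X (odd k) (dir k)"
proof -
  have yW: "y \<in> W" and y1: "m k < y" and y2: "y < e (Suc k)" using y by (auto simp: R_def)
  have "m (k - 1) \<le> y" using lo_lt_hi[OF k] y1 by simp
  then have u: "m k < (up k ^^ N) y" "(up k ^^ N) y < e (Suc k)" using AM1[OF k yW _ y2] by auto
  have "act (odd k) (dir k) y \<in> R k" unfolding act_up R_def using u funpow_in[OF up_aut yW] by blast
  then show ?thesis using RX[OF k] by blast
qed

lemma SelfL: assumes k: "1 \<le> k" "k \<le> Q" and y: "y \<in> L k"
  shows "act (odd k) (\<not> dir k) y \<in> X (odd k) (\<not> dir k)"
proof -
  have yW: "y \<in> W" and y1: "lf k < y" and y2: "y < m (k - 1)" using y by (auto simp: L_def)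
  have "y \<le> m k" using lo_lt_hi[OF k] y2 by simp
  then have u: "lf k < (dn k ^^ N) y" "(dn k ^^ N) y < m (k - 1)" using AM2[OF k yW y1] by auto
  have "act (odd k) (\<not> dir k) y \<in> L k" unfolding act_dn L_def using u funpow_in[OF dn_aut yW] by blast
  then show ?thesis using LX[OF k] by blast
qed

lemma pull: assumes "y \<in> W" "act a ee (z y) \<in> X a ee" shows "act a ee y \<in> X a ee"
  using O2[OF act_W[OF assms(1)]] act_comm[OF assms(1)] assms(2) unfolding X_def by simp

lemma zW: "y \<in> W \<Longrightarrow> z y \<in> W" using aut_in[OF z] .

lemma MC_base: assumes y: "y \<in> Z a' e'" and ne: "(a', e') \<noteq> (a, \<not> ee)"
  shows "act a ee y \<in> X a ee"
proof -
  from y consider (r) j where "j < Q" "y \<in> R j" "letR j = (a', e')"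
    | (l) j where "1 \<le> j" "j \<le> Q" "y \<in> L j" "letL j = (a', e')"
    unfolding Z_def by blast
  then show ?thesis
  proof cases
    case r
    have yW: "y \<in> W" and y1: "m j < y" and y2: "y < e (Suc j)" using r(2) by (auto simp: R_def)
    show ?thesis
    proof (cases "j = 0")
      case True
      then have a': "a' = False" "e' = dir Q" using r(3) by (auto simp: letR_def)
      show ?thesis
      proof (cases a)
        case False
        then have ee: "ee = dir Q" using ne a' by auto
        have "z (m 0) < z y" using aut_less[OF z m0W yW] y1 True by simp
        moreover have "z y < z (e 1)" using aut_less[OF z yW eW[of 1]] y2 True by simp
        ultimately have "z y \<in> R Q" using zW[OF yW] mQ e_per by (simp add: R_def)
        then have "act (odd Q) (dir Q) (z y) \<in> X (odd Q) (dir Q)" using SelfR Q_ge2 by simp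
        then show ?thesis using pull[OF yW] False ee Q_odd_F by simp
      next
        case True
        have "e 1 < m 1" using e_lt_m[of 1] Q_ge2 by simp
        then have "act (odd 1) ee y \<in> X (odd 1) ee"
          using Reg[of 1 y ee] Q_ge2 yW y1 y2 \<open>j = 0\<close> by simp
        then show ?thesis using True by simp
      qed
    next
      case False
      then have a': "a' = odd j" "e' = dir j" using r(3) by (auto simp: letR_def)
      show ?thesis
      proof (cases "a = odd j")
        case True
        then have ee: "ee = dir j" using ne a' by auto
        then show ?thesis using SelfR[of j y] r False True by simp
      next
        case False
        then have aa: "a = odd (Suc j)" by simp
        have k: "1 \<le> Suc j" "Suc j \<le> Q" using r(1) by auto
        have "e (Suc j) < m (Suc j)" using e_lt_m[OF k] .
        then have "act (odd (Suc j)) ee y \<in> X (odd (Suc j)) ee"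
          using Reg[OF k yW] y1 y2 by simp
        then show ?thesis using aa by simp
      qed
    qed
  next
    case l
    have yW: "y \<in> W" and y1: "lf j < y" and y2: "y < m (j - 1)" using l(3) by (auto simp: L_def)
    have a': "a' = odd j" "e' = (\<not> dir j)" using l(4) by (auto simp: letL_def)
    show ?thesis
    proof (cases "a = odd j")
      case True
      then have ee: "ee = (\<not> dir j)" using ne a' by auto
      then show ?thesis using SelfL[OF l(1,2,3)] True by simp
    next
      case False
      show ?thesis
      proof (cases "j = 1")
        case True
        then have aF: "a = False" using False by simp
        have "z y \<le> z (m 0)" using aut_le[OF z yW m0W] y2 True by simp
        then have h1: "z y \<le> m Q" using mQ by simp
        have "Q - 1 < Q" using Q_ge2 by simp
        then have "m (Q - 1) < e (Suc (Q - 1))" using m_lt_e by blast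
        then have "m (Q - 1) < e Q" using Q_ge2 by simp
        also have "\<dots> \<le> z p" using Q_le .
        also have "\<dots> \<le> z (lf 1)" using aut_le[OF z p(1) lfW] lf1 by simp
        also have "\<dots> < z y" using aut_less[OF z lfW yW] y1 True by simp
        finally have h2: "m (Q - 1) \<le> z y" by simp
        have "act (odd Q) ee (z y) \<in> X (odd Q) ee" using Reg[OF _ _ zW[OF yW] h2 h1] Q_ge2 by simp
        then show ?thesis using pull[OF yW] aF Q_odd_F by simp
      next
        case False
        define i where "i = j - 2"
        have i: "j = Suc (Suc i)" using False l(1) unfolding i_def by simp
        have k: "1 \<le> Suc i" "Suc i \<le> Q" using l(2) i by auto
        have aa: "a = odd (Suc i)" using \<open>a \<noteq> odd j\<close> i by simp
        have "i < Q" using k by simp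
        then have "m i < e (Suc i)" using m_lt_e by blast
        moreover have "e (Suc i) \<le> lf (Suc (Suc i))" using lf_ge .
        ultimately have h1: "m (Suc i - 1) \<le> y" using y1 i by simp
        have h2: "y \<le> m (Suc i)" using y2 i by simp
        have "act (odd (Suc i)) ee y \<in> X (odd (Suc i)) ee" using Reg[OF k yW h1 h2] .
        then show ?thesis using aa by simp
      qed
    qed
  qed
qed

lemma MC: assumes x: "x \<in> X a' e'" and ne: "(a', e') \<noteq> (a, \<not> ee)"
  shows "act a ee x \<in> X a ee"
  unfolding X_def
proof (rule O3[where F="act a ee" and x=x and S'="Z a' e'"])
  show "\<And>y. y \<in> W \<Longrightarrow> act a ee y \<in> W" by (rule act_W)
next
  show "\<And>y. y \<in> W \<Longrightarrow> act a ee (z y) = z (act a ee y)" by (rule act_comm)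
next
  fix y assume y: "y \<in> Z a' e'"
  show "act a ee y \<in> Orb (Z a ee)" using MC_base[OF y ne] unfolding X_def .
next
  show "Z a' e' \<subseteq> W" by (rule ZW)
next
  show "x \<in> Orb (Z a' e')" using x unfolding X_def .
qed

lemma x0W: "m 0 \<in> W" using m0W .

lemma x0_int: "p < m 0" "m 0 < z p" "m 0 < e 1" "lf 1 < m 0"
proof -
  show "lf 1 < m 0" using m_props(2)[of 0] Q_ge2 by simp
  then show "p < m 0" using lf1 by simp
  show "m 0 < e 1" using m_props(3)[of 0] Q_ge2 by simp
  then show "m 0 < z p" using eQ_zp[of 1] Q_ge2 by simp
qed

lemma act_x0: "act a ee (m 0) \<in> X a ee"
proof (cases a)
  case True
  have "m 0 \<le> m 1" using lo_lt_hi[of 1] Q_ge2 by simp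
  then show ?thesis using Reg[of 1 "m 0" ee] Q_ge2 x0W True by simp
next
  case False
  have "m (Q - 1) \<le> m Q" using lo_lt_hi[of Q] Q_ge2 by simp
  then have "act (odd Q) ee (z (m 0)) \<in> X (odd Q) ee"
    using Reg[of Q "z (m 0)" ee] Q_ge2 mQ zW[OF x0W] by simp
  then show ?thesis using pull[OF x0W] False Q_odd_F by simp
qed

lemma e0: "e 0 = p" by simp

lemma x0_notin: "m 0 \<notin> X a ee"
proof
  assume "m 0 \<in> X a ee"
  then have "m 0 \<in> Z a ee" using O4[OF Z_sub x0W x0_int(1,2)] unfolding X_def by blast
  have i0: "e 0 < m 0" using x0_int(1) by simp
  have i1: "m 0 < e (Suc 0)" using x0_int(3) by simp
  from \<open>m 0 \<in> Z a ee\<close> consider (r) j where "j < Q" "m 0 \<in> R j" | (l) j where "1 \<le> j" "j \<le> Q" "m 0 \<in> L j"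
    unfolding Z_def by blast
  then show False
  proof cases
    case r
    have "j = 0" using intervals[OF ZR_int(2,3)[OF r] i0 i1] by simp
    then show False using r(2) by (simp add: R_def)
  next
    case l
    have "j - 1 = 0" using intervals[OF ZL_int(2)[OF l] _ i0 i1] ZL_int(3)[OF l] l(1) by simp
    then have "j = 1" using l(1) by simp
    then show False using l(3) by (simp add: L_def)
  qed
qed

lemma Zdisj: assumes "y \<in> Z True e1" "y \<in> Z False e2" shows False
proof -
  have key: "\<exists>i. e i < y \<and> y < e (Suc i) \<and> ((\<exists>j<Q. y \<in> R j \<and> odd j = a \<and> i = j) \<or> (\<exists>j. 1 \<le> j \<and> j \<le> Q \<and> y \<in> L j \<and> odd j = a \<and> i = j - 1))"
    if "y \<in> Z a ee" for a ee
  proof -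
    from that consider (r) j where "j < Q" "y \<in> R j" "letR j = (a, ee)"
      | (l) j where "1 \<le> j" "j \<le> Q" "y \<in> L j" "letL j = (a, ee)"
      unfolding Z_def by blast
    then show ?thesis
    proof cases
      case r
      have "odd j = a" using r(3) by (simp add: letR_def)
      then show ?thesis using ZR_int(2,3)[OF r(1,2)] r(1,2) by blast
    next
      case l
      have "odd j = a" using l(4) by (simp add: letL_def)
      moreover have "e (j - 1) < y" "y < e (Suc (j - 1))" using ZL_int(2,3)[OF l(1,2,3)] l(1) by simp_all
      ultimately show ?thesis using l(1,2,3) by blast
    qed
  qed
  obtain i1 where i1: "e i1 < y" "y < e (Suc i1)"
    "(\<exists>j<Q. y \<in> R j \<and> odd j = True \<and> i1 = j) \<or> (\<exists>j. 1 \<le> j \<and> j \<le> Q \<and> y \<in> L j \<and> odd j = True \<and> i1 = j - 1)"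
    using key[OF assms(1)] by blast
  obtain i2 where i2: "e i2 < y" "y < e (Suc i2)"
    "(\<exists>j<Q. y \<in> R j \<and> odd j = False \<and> i2 = j) \<or> (\<exists>j. 1 \<le> j \<and> j \<le> Q \<and> y \<in> L j \<and> odd j = False \<and> i2 = j - 1)"
    using key[OF assms(2)] by blast
  have ii: "i1 = i2" using intervals[OF i1(1,2) i2(1,2)] .
  show False
    using i1(3) i2(3)
  proof (elim disjE exE conjE)
    fix j j' assume "odd j = True" "i1 = j" "odd j' = False" "i2 = j'"
    then show False using ii by simp
  next
    fix j j' assume h: "y \<in> R j" "i1 = j" "1 \<le> j'" "y \<in> L j'" "i2 = j' - 1"
    have "m j < y" using h(1) by (simp add: R_def)
    moreover have "y < m (j' - 1)" using h(4) by (simp add: L_def)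
    moreover have "j' - 1 = j" using ii h(2,5) by simp
    ultimately show False by simp
  next
    fix j j' assume h: "1 \<le> j" "y \<in> L j" "i1 = j - 1" "y \<in> R j'" "i2 = j'"
    have "m j' < y" using h(4) by (simp add: R_def)
    moreover have "y < m (j - 1)" using h(2) by (simp add: L_def)
    moreover have "j - 1 = j'" using ii h(3,5) by simp
    ultimately show False by simp
  next
    fix j j' assume "1 \<le> j" "odd j = True" "i1 = j - 1" "1 \<le> j'" "odd j' = False" "i2 = j' - 1"
    then have "j = j'" using ii by arith
    then show False using \<open>odd j = True\<close> \<open>odd j' = False\<close> by simp
  qed
qed

lemma Xdisj: "x \<in> X True e1 \<Longrightarrow> x \<in> X False e2 \<Longrightarrow> False"
  using O5[OF Z_sub Z_sub] Zdisj unfolding X_def by blast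

lemma XW: "X a ee \<subseteq> W" unfolding X_def Orb_def by blast

end

lemma gen_pow:
  assumes "x \<in> generate (BijGroup W) H"
  shows "x [^]\<^bsub>BijGroup W\<^esub> (n::nat) \<in> generate (BijGroup W) H"
proof (induction n)
  case 0 then show ?case by (simp add: generate.one)
next
  case (Suc n) then show ?case using generate.eng[OF Suc assms] by simp
qed

context ppsetup begin

lemma evl_pow:
  assumes f: "f \<in> Aut_ord W" and y: "y \<in> W"
  shows "evl W (f [^]\<^bsub>BijGroup W\<^esub> N, True) y = (f ^^ N) y"
    "evl W (f [^]\<^bsub>BijGroup W\<^esub> N, False) y = (ginv W f ^^ N) y"
proof -
  have fc: "f \<in> carrier (BijGroup W)" using aut_Bij[OF f] by (simp add: carrier_BijGroup)
  show "evl W (f [^]\<^bsub>BijGroup W\<^esub> N, True) y = (f ^^ N) y"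
    using pow_BijGroup[OF aut_Bij[OF f] y] by (simp add: evl_def)
  have "inv\<^bsub>BijGroup W\<^esub> (f [^]\<^bsub>BijGroup W\<^esub> N) = (inv\<^bsub>BijGroup W\<^esub> f) [^]\<^bsub>BijGroup W\<^esub> N"
    using group.nat_pow_inv[OF group_BijGroup fc, symmetric] .
  also have "\<dots> = (ginv W f) [^]\<^bsub>BijGroup W\<^esub> N" using ginv_BijGroup[OF f] by simp
  finally show "evl W (f [^]\<^bsub>BijGroup W\<^esub> N, False) y = (ginv W f ^^ N) y"
    using pow_BijGroup[OF aut_Bij[OF ginv_aut[OF f]] y] by (simp add: evl_def)
qed

theorem main_free: "contains_nonabelian_free (BijGroup W) (generate (BijGroup W) {\<alpha>, \<beta>})"
proof -
  define g where "g = \<alpha> [^]\<^bsub>BijGroup W\<^esub> N"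
  define h where "h = \<beta> [^]\<^bsub>BijGroup W\<^esub> N"
  have ac: "\<alpha> \<in> carrier (BijGroup W)" using aut_Bij[OF a] by (simp add: carrier_BijGroup)
  have bc: "\<beta> \<in> carrier (BijGroup W)" using aut_Bij[OF b] by (simp add: carrier_BijGroup)
  have gB: "g \<in> Bij W" using monoid.nat_pow_closed[OF group.is_monoid[OF group_BijGroup] ac]
    unfolding g_def carrier_BijGroup .
  have hB: "h \<in> Bij W" using monoid.nat_pow_closed[OF group.is_monoid[OF group_BijGroup] bc]
    unfolding h_def carrier_BijGroup .
  have gG: "g \<in> generate (BijGroup W) {\<alpha>, \<beta>}" unfolding g_def by (rule gen_pow) (simp add: generate.incl)
  have hG: "h \<in> generate (BijGroup W) {\<alpha>, \<beta>}" unfolding h_def by (rule gen_pow) (simp add: generate.incl)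
  have evg: "evl W (g, ee) y = act True ee y" if "y \<in> W" for ee y
    using evl_pow[OF a that] unfolding g_def act_def gm_def by (cases ee) simp_all
  have evh: "evl W (h, ee) y = act False ee y" if "y \<in> W" for ee y
    using evl_pow[OF b that] unfolding h_def act_def gm_def by (cases ee) simp_all
  have gh: "g \<noteq> h"
  proof
    assume "g = h"
    then have "act True True (m 0) = act False True (m 0)" using evg[OF x0W, of True] evh[OF x0W, of True] by simp
    then have "act True True (m 0) \<in> X False True" using act_x0[of False True] by simp
    then show False using Xdisj[OF act_x0[of True True]] by blast
  qed
  define XX where "XX l = X (fst l = g) (snd l)" for l :: "(real \<Rightarrow> real) \<times> bool"
  have ev: "evl W l y = act (fst l = g) (snd l) y" if "fst l \<in> {g, h}" "y \<in> W" for l y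
  proof (cases "fst l = g")
    case True
    then have "l = (g, snd l)" by (simp add: prod_eq_iff)
    then have "evl W l y = evl W (g, snd l) y" by simp
    then show ?thesis using evg[OF that(2), of "snd l"] True by simp
  next
    case False
    then have "fst l = h" using that(1) by simp
    then have "l = (h, snd l)" by (simp add: prod_eq_iff)
    then have "evl W l y = evl W (h, snd l) y" by simp
    then show ?thesis using evh[OF that(2), of "snd l"] False by simp
  qed
  have fb: "free_basis (BijGroup W) {g, h}"
  proof (rule pingpong[of "{g, h}" W XX "m 0"])
    show "{g, h} \<subseteq> Bij W" using gB hB by simp
  next
    fix l mm y assume l: "fst l \<in> {g, h}" and mm: "fst mm \<in> {g, h}" and ne: "mm \<noteq> (fst l, \<not> snd l)"
      and y: "y \<in> XX mm"
    have yW: "y \<in> W" using y XW unfolding XX_def by blast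
    have ne2: "(fst mm = g, snd mm) \<noteq> (fst l = g, \<not> snd l)"
    proof
      assume eq: "(fst mm = g, snd mm) = (fst l = g, \<not> snd l)"
      then have "fst mm = fst l" using l mm gh by auto
      moreover have "snd mm = (\<not> snd l)" using eq by simp
      ultimately have "mm = (fst l, \<not> snd l)" by (simp add: prod_eq_iff)
      then show False using ne by simp
    qed
    have "act (fst l = g) (snd l) y \<in> X (fst l = g) (snd l)"
      using MC[OF y[unfolded XX_def] ne2] .
    then show "evl W l y \<in> XX l" using ev[OF l yW] unfolding XX_def by simp
  next
    show "m 0 \<in> W" by (rule x0W)
  next
    fix l :: "(real \<Rightarrow> real) \<times> bool" assume l: "fst l \<in> {g, h}"
    show "m 0 \<notin> XX l" unfolding XX_def using x0_notin .
    show "evl W l (m 0) \<in> XX l" unfolding XX_def using ev[OF l x0W] act_x0 by simp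
  qed
  have sub: "{g, h} \<subseteq> generate (BijGroup W) {\<alpha>, \<beta>}" using gG hG by simp
  have two: "\<exists>a b. a \<in> {g, h} \<and> b \<in> {g, h} \<and> a \<noteq> b" using gh by blast
  show ?thesis unfolding contains_nonabelian_free_def
    by (rule exI[of _ "{g, h}"]) (intro conjI sub fb two)
qed

end

theorem lemma4p1:
  fixes W :: "real set" and \<alpha> \<beta> z :: "real \<Rightarrow> real"
  assumes "W \<noteq> {}" and "closed W"
    and "\<alpha> \<in> Aut_ord W" and "\<beta> \<in> Aut_ord W" and "z \<in> Aut_ord W"
    and "Fix_on W z = {}"
    and "z \<otimes>\<^bsub>BijGroup W\<^esub> \<alpha> = \<alpha> \<otimes>\<^bsub>BijGroup W\<^esub> z"
    and "z \<otimes>\<^bsub>BijGroup W\<^esub> \<beta> = \<beta> \<otimes>\<^bsub>BijGroup W\<^esub> z"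
    and "Fix_on W \<alpha> \<noteq> {}" and "Fix_on W \<beta> \<noteq> {}"
    and "Fix_on W \<alpha> \<inter> Fix_on W \<beta> = {}"
  shows "contains_nonabelian_free (BijGroup W) (generate (BijGroup W) {\<alpha>, \<beta>})"
proof -
  note W = assms(2) and a = assms(3) and b = assms(4) and z = assms(5)
  have zfree: "z x \<noteq> x" if "x \<in> W" for x using assms(6) that by (auto simp: Fix_on_def)
  have za: "z (\<alpha> x) = \<alpha> (z x)" if "x \<in> W" for x
  proof -
    have "(z \<otimes>\<^bsub>BijGroup W\<^esub> \<alpha>) x = (\<alpha> \<otimes>\<^bsub>BijGroup W\<^esub> z) x" using assms(7) by simp
    then show ?thesis using mult_BijGroup[OF aut_Bij[OF z] aut_Bij[OF a] that]
        mult_BijGroup[OF aut_Bij[OF a] aut_Bij[OF z] that] by simp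
  qed
  have zb: "z (\<beta> x) = \<beta> (z x)" if "x \<in> W" for x
  proof -
    have "(z \<otimes>\<^bsub>BijGroup W\<^esub> \<beta>) x = (\<beta> \<otimes>\<^bsub>BijGroup W\<^esub> z) x" using assms(8) by simp
    then show ?thesis using mult_BijGroup[OF aut_Bij[OF z] aut_Bij[OF b] that]
        mult_BijGroup[OF aut_Bij[OF b] aut_Bij[OF z] that] by simp
  qed
  have disj: "\<beta> x \<noteq> x" if "x \<in> W" "\<alpha> x = x" for x
    using assms(11) that by (auto simp: Fix_on_def)
  obtain q where q: "q \<in> Fix_on W \<beta>" using assms(10) by blast
  obtain a0 where a0: "a0 \<in> Fix_on W \<alpha>" using assms(9) by blast
  have "\<exists>t\<in>Fix_on W \<alpha>. t > q"
    using unbounded_up[OF z W zfree, of "Fix_on W \<alpha>" a0 q] fix_z[OF a z za] a0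
    by (auto simp: Fix_on_def)
  then obtain p where p: "p \<in> Fix_on W \<alpha>" "q < p" by blast
  have pW: "p \<in> W" "\<alpha> p = p" using p by (auto simp: Fix_on_def)
  have qW: "q \<in> W" "\<beta> q = q" using q by (auto simp: Fix_on_def)
  show ?thesis
  proof (cases "p < z p")
    case True
    interpret ppsetup W \<alpha> \<beta> z p q
      using W a b z zfree za zb pW True qW p(2) disj by unfold_locales auto
    show ?thesis by (rule main_free)
  next
    case False
    then have "z p < p" using zfree[OF pW(1)] by simp
    then have zi_p: "p < ginv W z p"
      using aut_less[OF z pW(1) ginv_in[OF z pW(1)]] f_ginv[OF z pW(1)] by simp
    have zifree: "ginv W z x \<noteq> x" if "x \<in> W" for x
      using f_ginv[OF z that] zfree[OF that] by force
    have zia: "ginv W z (\<alpha> x) = \<alpha> (ginv W z x)" if "x \<in> W" for x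
      using comm_ginv_left[OF a z za that] .
    have zib: "ginv W z (\<beta> x) = \<beta> (ginv W z x)" if "x \<in> W" for x
      using comm_ginv_left[OF b z zb that] .
    interpret ppsetup W \<alpha> \<beta> "ginv W z" p q
      using W a b ginv_aut[OF z] zifree zia zib pW zi_p qW p(2) disj by unfold_locales auto
    show ?thesis by (rule main_free)
  qed
qed

end
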